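(* Let $g_1, g_2$ be integers with $g_1 > g_2 \geq 2$, and let $\beta > 0$ be a real number. Let $(a_n)_{n\geq 1}$ be a sequence of positive integers with $a_1 \geq 2$ and $a_{n+1} = a_n^{1+\beta}$ for all $n \geq 1$. Define $$\theta_1 = \sum_{n=1}^{\infty} \frac{1}{g_1^{a_n}}, \qquad \theta_2 = \sum_{n=1}^{\infty} \frac{1}{g_2^{a_n}}.$$ Then each of the real numbers $\theta_1 + \theta_2$, $\theta_1 - \theta_2$, $\theta_1 \theta_2$ and $\theta_1/\theta_2$ is transcendental. *)

theory Defs
  imports Complex_Main "HOL-Computational_Algebra.Polynomial"
begin

end

theory Submission
  imports Defs
begin


lemma poly_lip:
  fixes P :: "real poly"
  assumes "poly P x = 0"
  obtains M where "M > 0" "\<And>y. \<bar>y - x\<bar> \<le> 1 \<Longrightarrow> \<bar>poly P y\<bar> \<le> M * \<bar>y - x\<bar>"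
proof -
  from assms obtain Q where Q: "P = [:-x,1:] * Q" by (auto simp: poly_eq_0_iff_dvd elim!: dvdE)
  have "\<exists>M. (\<forall>y. x-1 \<le> y \<and> y \<le> x+1 \<longrightarrow> \<bar>poly Q y\<bar> \<le> M) \<and> (\<exists>y. x-1 \<le> y \<and> y \<le> x+1 \<and> \<bar>poly Q y\<bar> = M)"
    by (rule isCont_eq_Ub) auto
  then obtain M where M: "\<And>y. x-1 \<le> y \<Longrightarrow> y \<le> x+1 \<Longrightarrow> \<bar>poly Q y\<bar> \<le> M" by blast
  show ?thesis
  proof (rule that[of "max M 1"])
    fix y assume "\<bar>y - x\<bar> \<le> 1"
    then have "x-1 \<le> y" "y \<le> x+1" by (auto simp: abs_le_iff)
    then have "\<bar>poly Q y\<bar> \<le> max M 1" using M[of y] by linarith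
    then have "\<bar>y - x\<bar> * \<bar>poly Q y\<bar> \<le> \<bar>y - x\<bar> * max M 1" by (rule mult_left_mono) auto
    then show "\<bar>poly P y\<bar> \<le> max M 1 * \<bar>y - x\<bar>" by (simp add: Q abs_mult[symmetric] mult.commute left_diff_distrib)
  qed auto
qed

lemma poly_int_denom:
  fixes P :: "real poly" and p q :: int
  assumes "\<And>i. coeff P i \<in> \<int>" "q \<noteq> 0"
  shows "real_of_int q ^ degree P * poly P (p / q) \<in> \<int>"
proof -
  have "real_of_int q ^ degree P * poly P (p / q) = (\<Sum>i\<le>degree P. coeff P i * (of_int p ^ i * of_int q ^ (degree P - i)))"
    unfolding poly_altdef sum_distrib_left
  proof (rule sum.cong)
    fix i assume "i \<in> {..degree P}"
    then have "real_of_int q ^ degree P = of_int q ^ i * of_int q ^ (degree P - i)"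
      by (simp add: power_add[symmetric])
    then show "real_of_int q ^ degree P * (coeff P i * (p / q) ^ i) = coeff P i * (of_int p ^ i * of_int q ^ (degree P - i))"
      using assms(2) by (simp add: power_divide field_simps)
  qed simp
  also have "\<dots> \<in> \<int>" using assms(1) by (intro Ints_sum Ints_mult Ints_power) auto
  finally show ?thesis .
qed

lemma liouville_crit:
  fixes x :: real and r Q :: "nat \<Rightarrow> real"
  assumes rep: "\<And>n. \<exists>(p::int) (q::int). q \<ge> 1 \<and> real_of_int q \<le> Q n \<and> r n = p / q"
    and ne: "eventually (\<lambda>n. r n \<noteq> x) sequentially"
    and approx: "\<And>k c. c > 0 \<Longrightarrow> eventually (\<lambda>n. \<bar>x - r n\<bar> * Q n ^ k < c) sequentially"
  shows "\<not> algebraic x"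
proof
  assume "algebraic x"
  then obtain P where Pint: "\<And>i. coeff P i \<in> \<int>" and P0: "P \<noteq> 0" and Px: "poly P x = 0"
    unfolding algebraic_def by blast
  obtain M where M: "M > 0" "\<And>y. \<bar>y - x\<bar> \<le> 1 \<Longrightarrow> \<bar>poly P y\<bar> \<le> M * \<bar>y - x\<bar>"
    using poly_lip[OF Px] by blast
  define R where "R = {y. poly P y = 0} - {x}"
  have finR: "finite R" using poly_roots_finite[OF P0] by (simp add: R_def)
  have ev0: "eventually (\<lambda>n. \<bar>x - r n\<bar> < c) sequentially" if "c > 0" for c
    using approx[of c 0] that by simp
  have evR: "eventually (\<lambda>n. \<forall>y\<in>R. r n \<noteq> y) sequentially"
  proof (rule eventually_ball_finite[OF finR], rule ballI)
    fix y assume "y \<in> R"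
    then have "\<bar>y - x\<bar> > 0" by (auto simp: R_def)
    from ev0[OF this] show "eventually (\<lambda>n. r n \<noteq> y) sequentially"
      by eventually_elim auto
  qed
  have "eventually (\<lambda>n. (\<forall>y\<in>R. r n \<noteq> y) \<and> r n \<noteq> x \<and> \<bar>x - r n\<bar> < 1 \<and> \<bar>x - r n\<bar> * Q n ^ degree P < 1 / M) sequentially"
    using evR ne ev0[of 1] approx[of "1/M" "degree P"] M(1)
    by (simp add: eventually_conj_iff)
  then obtain n where n: "\<forall>y\<in>R. r n \<noteq> y" "r n \<noteq> x" "\<bar>x - r n\<bar> < 1" "\<bar>x - r n\<bar> * Q n ^ degree P < 1 / M"
    by (auto dest: eventually_happens)
  obtain p q :: int where pq: "q \<ge> 1" "real_of_int q \<le> Q n" "r n = p / q" using rep[of n] by blast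
  have nz: "poly P (r n) \<noteq> 0" using n(1,2) by (auto simp: R_def)
  have "real_of_int q ^ degree P * poly P (r n) \<in> \<int>"
    using poly_int_denom[OF Pint, of q p] pq by simp
  moreover have "real_of_int q ^ degree P * poly P (r n) \<noteq> 0" using nz pq(1) by simp
  ultimately have "1 \<le> \<bar>real_of_int q ^ degree P * poly P (r n)\<bar>" by (rule Ints_nonzero_abs_ge1)
  also have "\<dots> = real_of_int q ^ degree P * \<bar>poly P (r n)\<bar>" using pq(1) by (simp add: abs_mult)
  also have "\<dots> \<le> Q n ^ degree P * (M * \<bar>x - r n\<bar>)"
  proof (rule mult_mono)
    show "real_of_int q ^ degree P \<le> Q n ^ degree P" using pq by (intro power_mono) auto
    show "\<bar>poly P (r n)\<bar> \<le> M * \<bar>x - r n\<bar>" using M(2)[of "r n"] n(3) by (simp add: abs_minus_commute)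
  qed (use pq in auto)
  also have "\<dots> = M * (\<bar>x - r n\<bar> * Q n ^ degree P)" by simp
  also have "\<dots> < M * (1 / M)" using n(4) M(1) by (intro mult_strict_left_mono) auto
  also have "\<dots> = 1" using M(1) by simp
  finally show False by simp
qed


lemma mono_shift:
  fixes A :: "nat \<Rightarrow> nat"
  assumes "strict_mono A"
  shows "A k + m \<le> A (m + k)"
proof (induction m)
  case (Suc m)
  have "A (m + k) < A (Suc m + k)" using assms by (simp add: strict_mono_def)
  then show ?case using Suc by simp
qed simp

lemma series_facts:
  fixes g :: int and A :: "nat \<Rightarrow> nat"
  assumes g: "g \<ge> 2" and sm: "strict_mono A" and An: "\<And>n. A n \<ge> n + 1"
  defines "f \<equiv> \<lambda>n. 1 / real_of_int g ^ A n"
  shows "summable f" "suminf f \<le> 1"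
    "\<And>N. 1 / real_of_int g ^ A (Suc N) \<le> suminf f - sum f {..N}"
    "\<And>N. suminf f - sum f {..N} \<le> 2 / real_of_int g ^ A (Suc N)"
    "\<And>N. f 0 \<le> sum f {..N}"
    "\<And>N. sum f {..N} \<le> suminf f"
    "\<And>N. \<exists>P::int. 1 \<le> P \<and> P \<le> g ^ A N \<and> sum f {..N} = P / real_of_int g ^ A N"
proof -
  have g2: "real_of_int g \<ge> 2" using g by simp
  have fpos: "f n > 0" for n using g2 by (simp add: f_def)
  have fle: "f n \<le> (1/2) * (1/2)^n" for n
  proof -
    have "(2::real) ^ (n+1) \<le> 2 ^ A n" using An[of n] by (intro power_increasing) auto
    also have "\<dots> \<le> real_of_int g ^ A n" using g2 by (intro power_mono) auto
    finally have h: "2 * 2 ^ n \<le> real_of_int g ^ A n" by simp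
    have "real_of_int g ^ A n > 0" using g2 by simp
    then show ?thesis using h by (simp add: f_def power_divide field_simps)
  qed
  have sg: "summable (\<lambda>n. (1/2::real) * (1/2)^n)" by (intro summable_mult summable_geometric) auto
  have sg': "(\<Sum>n. (1/2::real) * (1/2)^n) = 1" 
  proof -
    have "(\<Sum>n. (1/2::real) * (1/2)^n) = (1/2) * (\<Sum>n. (1/2::real)^n)"
      by (rule suminf_mult) (rule summable_geometric, simp)
    also have "(\<Sum>n. (1/2::real)^n) = 2" by (subst suminf_geometric) auto
    finally show ?thesis by simp
  qed
  show sf: "summable f"
  proof (rule summable_comparison_test'[OF sg])
    fix n show "norm (f n) \<le> (1/2) * (1/2)^n" using fpos[of n] fle[of n] by simp
  qed
  show "suminf f \<le> 1" using suminf_le[OF fle sf sg] sg' by simp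
  fix N
  show "sum f {..N} \<le> suminf f" using sf fpos by (intro sum_le_suminf) (auto intro: less_imp_le)
  have tail: "suminf f - sum f {..N} = (\<Sum>m. f (m + Suc N))"
    using suminf_split_initial_segment[OF sf, of "Suc N"] by (simp add: lessThan_Suc_atMost)
  have st: "summable (\<lambda>m. f (m + Suc N))" using sf by (rule summable_ignore_initial_segment)
  have "sum (\<lambda>m. f (m + Suc N)) {0} \<le> (\<Sum>m. f (m + Suc N))"
    using st fpos by (intro sum_le_suminf) (auto intro: less_imp_le)
  then have "f (Suc N) \<le> suminf f - sum f {..N}" unfolding tail by simp
  then show "1 / real_of_int g ^ A (Suc N) \<le> suminf f - sum f {..N}" by (simp only: f_def)
  have tle: "f (m + Suc N) \<le> (2 / real_of_int g ^ A (Suc N)) * ((1/2) * (1/2)^m)" for m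
  proof -
    have "real_of_int g ^ A (Suc N) * 2 ^ m \<le> real_of_int g ^ A (Suc N) * real_of_int g ^ m"
      using g2 by (intro mult_left_mono power_mono) auto
    also have "\<dots> = real_of_int g ^ (A (Suc N) + m)" by (simp add: power_add)
    also have "\<dots> \<le> real_of_int g ^ A (m + Suc N)"
      using mono_shift[OF sm, of "Suc N" m] g2 by (intro power_increasing) auto
    finally have h: "real_of_int g ^ A (Suc N) * 2 ^ m \<le> real_of_int g ^ A (m + Suc N)" .
    have p1: "real_of_int g ^ A (Suc N) > 0" using g2 by simp
    show ?thesis using h p1 g2 by (simp add: f_def power_divide field_simps)
  qed
  have "(\<Sum>m. f (m + Suc N)) \<le> (\<Sum>m. (2 / real_of_int g ^ A (Suc N)) * ((1/2) * (1/2)^m))"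
    using tle st sg by (intro suminf_le summable_mult) auto
  also have "\<dots> = (2 / real_of_int g ^ A (Suc N)) * (\<Sum>m. (1/2::real) * (1/2)^m)"
    by (rule suminf_mult[OF sg])
  also have "\<dots> = 2 / real_of_int g ^ A (Suc N)" by (simp only: sg' mult_1_right)
  finally show "suminf f - sum f {..N} \<le> 2 / real_of_int g ^ A (Suc N)" using tail by simp
  show f0: "f 0 \<le> sum f {..N}" using fpos by (intro member_le_sum) (auto intro: less_imp_le)
  define P where "P = (\<Sum>n\<le>N. g ^ (A N - A n))"
  have gA: "real_of_int g ^ A N > 0" using g2 by simp
  have eq: "sum f {..N} = P / real_of_int g ^ A N"
    unfolding P_def of_int_sum sum_divide_distrib f_def
  proof (rule sum.cong)
    fix n assume "n \<in> {..N}"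
    then have "A n \<le> A N" using sm by (simp add: strict_mono_less_eq)
    then have "real_of_int g ^ A N = real_of_int g ^ (A N - A n) * real_of_int g ^ A n"
      by (simp add: power_add[symmetric])
    then show "1 / real_of_int g ^ A n = real_of_int (g ^ (A N - A n)) / real_of_int g ^ A N"
      using g2 by (simp add: field_simps)
  qed simp
  have "0 < f 0" by (rule fpos)
  then have "0 < real_of_int P / real_of_int g ^ A N" using f0 eq by linarith
  then have "0 < real_of_int P" using gA g by (simp add: zero_less_divide_iff)
  then have P1: "1 \<le> P" by simp
  have "sum f {..N} \<le> 1" using \<open>sum f {..N} \<le> suminf f\<close> \<open>suminf f \<le> 1\<close> by linarith
  then have "real_of_int P \<le> real_of_int g ^ A N" using eq gA by (simp add: divide_le_eq)
  then have "P \<le> g ^ A N" by (metis of_int_le_iff of_int_power)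
  then show "\<exists>P::int. 1 \<le> P \<and> P \<le> g ^ A N \<and> sum f {..N} = P / real_of_int g ^ A N"
    using P1 eq by blast
qed


lemma ev_powr:
  fixes L C D b :: real
  assumes L: "L > 0" and b: "b > 0"
  shows "eventually (\<lambda>t. C + D * t < t powr (1 + b) * L) at_top"
proof -
  define B where "B = \<bar>C\<bar> + \<bar>D\<bar> + 1"
  have B: "B > 0" by (simp add: B_def)
  show ?thesis
    using eventually_ge_at_top[of "max 1 ((B/L) powr (1/b))"]
  proof eventually_elim
    case (elim t)
    then have t1: "t \<ge> 1" and t2: "(B/L) powr (1/b) \<le> t" by auto
    have "B/L = ((B/L) powr (1/b)) powr b" using B L b by (simp add: powr_powr)
    also have "\<dots> \<le> t powr b" using t2 b by (intro powr_mono2) auto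
    finally have tb: "B \<le> t powr b * L" using L by (simp add: divide_le_eq)
    have "t powr (1 + b) * L = t * (t powr b * L)" using t1 by (simp add: powr_add)
    also have "\<dots> \<ge> t * B" using tb t1 by (intro mult_left_mono) auto
    finally have "t * B \<le> t powr (1 + b) * L" .
    moreover have "C + D * t < t * B"
    proof -
      have "D * t \<le> \<bar>D\<bar> * t" using t1 by (intro mult_right_mono) auto
      then have "C + D * t \<le> \<bar>C\<bar> + \<bar>D\<bar> * t" using abs_ge_self[of C] by linarith
      also have "\<dots> < t * \<bar>C\<bar> + t * \<bar>D\<bar> + t"
      proof -
        have "1 * \<bar>C\<bar> \<le> t * \<bar>C\<bar>" using t1 by (intro mult_right_mono) auto
        then show ?thesis using t1 by (simp add: mult.commute)
      qed
      also have "\<dots> = t * B" by (simp add: B_def algebra_simps)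
      finally show ?thesis .
    qed
    ultimately show ?case by linarith
  qed
qed

lemma asym:
  fixes g1 g2 :: int and A :: "nat \<Rightarrow> nat" and \<beta> K c :: real and k :: nat
  assumes g2: "g2 \<ge> 2" and g12: "g1 > g2" and b: "\<beta> > 0" and sm: "strict_mono A"
    and rec: "\<And>n. real (A (Suc n)) = real (A n) powr (1 + \<beta>)"
    and K: "K \<ge> 0" and c: "c > 0"
  shows "eventually (\<lambda>N. K * (1 / real_of_int g2 ^ A (Suc N)) * real_of_int (g1 ^ A N * g2 ^ A N) ^ k < c) sequentially"
proof -
  define L where "L = ln (real_of_int g2)"
  have L: "L > 0" using g2 by (simp add: L_def)
  have ev: "eventually (\<lambda>t. (ln (K+1) - ln c) + (2 * k * ln (real_of_int g1)) * t < t powr (1 + \<beta>) * L) at_top"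
    by (rule ev_powr[OF L b])
  have fl: "filterlim (\<lambda>N. real (A N)) at_top sequentially"
    by (rule filterlim_compose[OF filterlim_real_sequentially filterlim_subseq[OF sm]])
  show ?thesis using eventually_compose_filterlim[OF ev fl]
  proof eventually_elim
    case (elim N)
    define a where "a = A N"
    define bb where "bb = A (Suc N)"
    have rb: "real bb = real a powr (1 + \<beta>)" using rec[of N] by (simp add: a_def bb_def)
    have ineq: "ln (K+1) + real (2 * k * a) * ln (real_of_int g1) < ln c + real bb * ln (real_of_int g2)"
      using elim rb by (simp add: a_def L_def algebra_simps)
    have G1: "real_of_int g1 > 0" "real_of_int g2 > 0" using g2 g12 by auto
    have "(K + 1) * real_of_int g1 ^ (2 * k * a) < c * real_of_int g2 ^ bb"
    proof -
      have "ln ((K + 1) * real_of_int g1 ^ (2 * k * a)) < ln (c * real_of_int g2 ^ bb)"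
        using ineq K c G1 by (simp add: ln_mult ln_realpow)
      then show ?thesis using K c G1 by simp
    qed
    moreover have "K * (1 / real_of_int g2 ^ bb) * real_of_int (g1 ^ a * g2 ^ a) ^ k
        \<le> (K + 1) * real_of_int g1 ^ (2 * k * a) / real_of_int g2 ^ bb"
    proof -
      have "real_of_int (g1 ^ a * g2 ^ a) ^ k \<le> (real_of_int g1 ^ a * real_of_int g1 ^ a) ^ k"
        using g2 g12 by (simp add: power_mono mult_mono)
      also have "\<dots> = real_of_int g1 ^ (2 * k * a)"
      proof -
        have "real_of_int g1 ^ a * real_of_int g1 ^ a = real_of_int g1 ^ (2 * a)"
          by (simp add: mult_2 power_add)
        also have "(\<dots>) ^ k = real_of_int g1 ^ (2 * a * k)" by (simp add: power_mult)
        finally show ?thesis by (simp add: ac_simps)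
      qed
      finally have h: "real_of_int (g1 ^ a * g2 ^ a) ^ k \<le> real_of_int g1 ^ (2 * k * a)" .
      have "K * real_of_int (g1 ^ a * g2 ^ a) ^ k \<le> (K + 1) * real_of_int g1 ^ (2 * k * a)"
        using h K G1 by (intro mult_mono) auto
      then show ?thesis using G1 by (simp add: divide_right_mono)
    qed
    ultimately show ?case using G1 by (simp add: a_def bb_def field_simps)
  qed
qed


lemma frac_h:
  fixes x y a b :: real
  assumes "x > 0" "y > 0"
  shows "a/x + b/y = (a*y + b*x)/(x*y)" "a/x - b/y = (a*y - b*x)/(x*y)"
    "(a/x) * (b/y) = (a*b)/(x*y)" "b \<noteq> 0 \<Longrightarrow> (a/x) / (b/y) = (a*y)/(b*x)"
  using assms by (auto simp: field_simps)

theorem theorem1: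
  fixes g1 g2 :: int and \<beta> :: real and a :: "nat \<Rightarrow> nat"
    and \<theta>1 \<theta>2 :: real
  assumes "g1 > g2" and "g2 \<ge> 2"
    and "\<beta> > 0"
    and "\<forall>n\<ge>1. a n > 0"
    and "a 1 \<ge> 2"
    and "\<forall>n\<ge>1. real (a (n + 1)) = real (a n) powr (1 + \<beta>)"
    and "\<theta>1 = (\<Sum>n. 1 / real_of_int g1 ^ a (n + 1))"
    and "\<theta>2 = (\<Sum>n. 1 / real_of_int g2 ^ a (n + 1))"
  shows "\<not> algebraic (\<theta>1 + \<theta>2) \<and> \<not> algebraic (\<theta>1 - \<theta>2)
       \<and> \<not> algebraic (\<theta>1 * \<theta>2) \<and> \<not> algebraic (\<theta>1 / \<theta>2)"
proof -
  define A where "A n = a (Suc n)" for n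
  have A0: "A 0 \<ge> 2" using assms(5) by (simp add: A_def)
  have rec: "real (A (Suc n)) = real (A n) powr (1 + \<beta>)" for n
    using assms(6)[rule_format, of "Suc n"] by (simp add: A_def)
  have Age2: "A n \<ge> 2" for n
  proof (induction n)
    case 0 then show ?case using A0 by simp
  next
    case (Suc n)
    have "real (A n) = real (A n) powr 1" using Suc by simp
    also have "\<dots> \<le> real (A n) powr (1 + \<beta>)" using Suc assms(3) by (intro powr_mono) auto
    finally show ?case using rec[of n] Suc by simp
  qed
  have Ainc: "A n < A (Suc n)" for n
  proof -
    have "real (A n) = real (A n) powr 1" using Age2[of n] by simp
    also have "\<dots> < real (A n) powr (1 + \<beta>)" using Age2[of n] assms(3) by (intro powr_less_mono) auto
    finally show ?thesis using rec[of n] by simp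
  qed
  have sm: "strict_mono A" using Ainc by (simp add: strict_mono_Suc_iff)
  have An: "A n \<ge> n + 1" for n
  proof (induction n)
    case 0 then show ?case using A0 by simp
  next
    case (Suc n) then show ?case using Ainc[of n] by simp
  qed
  have g1: "g1 \<ge> 2" using assms(1,2) by simp
  define f1 where "f1 = (\<lambda>n. 1 / real_of_int g1 ^ A n)"
  define f2 where "f2 = (\<lambda>n. 1 / real_of_int g2 ^ A n)"
  have th1: "\<theta>1 = suminf f1" using assms(7) by (simp add: f1_def A_def)
  have th2: "\<theta>2 = suminf f2" using assms(8) by (simp add: f2_def A_def)
  note F1 = series_facts[OF g1 sm An, folded f1_def]
  note F2 = series_facts[OF assms(2) sm An, folded f2_def]
  define S1 where "S1 N = sum f1 {..N}" for N
  define S2 where "S2 N = sum f2 {..N}" for N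
  define T1 where "T1 N = \<theta>1 - S1 N" for N
  define T2 where "T2 N = \<theta>2 - S2 N" for N
  define E where "E N = 1 / real_of_int g2 ^ A (Suc N)" for N
  define Q where "Q N = real_of_int (g1 ^ A N * g2 ^ A N)" for N
  have G: "real_of_int g1 \<ge> 2" "real_of_int g2 \<ge> 2" "real_of_int g2 < real_of_int g1"
    using g1 assms(1,2) by auto
  have Epos: "E N > 0" for N using G by (simp add: E_def)
  have Qnn: "Q N \<ge> 0" for N using G by (simp add: Q_def)
  have T1le: "T1 N \<le> 2 * E N" for N
  proof -
    have "T1 N \<le> 2 / real_of_int g1 ^ A (Suc N)" using F1(4)[of N] by (simp add: T1_def S1_def th1)
    also have "\<dots> \<le> 2 / real_of_int g2 ^ A (Suc N)" using G
      by (intro divide_left_mono power_mono mult_pos_pos) auto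
    finally show ?thesis by (simp add: E_def)
  qed
  have T2le: "T2 N \<le> 2 * E N" for N using F2(4)[of N] by (simp add: T2_def S2_def th2 E_def)
  have T2ge: "T2 N \<ge> E N" for N using F2(3)[of N] by (simp add: T2_def S2_def th2 E_def)
  have T1ge: "T1 N \<ge> 1 / real_of_int g1 ^ A (Suc N)" for N using F1(3)[of N] by (simp add: T1_def S1_def th1)
  have T1pos: "T1 N > 0" for N using T1ge[of N] G by (smt (verit) zero_less_divide_1_iff zero_less_power)
  have T2pos: "T2 N > 0" for N using T2ge[of N] Epos[of N] by simp
  have m1: "f1 0 > 0" "f2 0 > 0" using G by (auto simp: f1_def f2_def)
  have S1ge: "S1 N \<ge> f1 0" for N using F1(5) by (simp add: S1_def f1_def)
  have S2ge: "S2 N \<ge> f2 0" for N using F2(5) by (simp add: S2_def f2_def)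
  have S1le: "S1 N \<le> 1" "T1 N \<le> 1" for N using F1(2) F1(6)[of N] S1ge[of N] m1 by (auto simp: S1_def T1_def th1)
  have S2le: "S2 N \<le> 1" "T2 N \<le> 1" for N using F2(2) F2(6)[of N] S2ge[of N] m1 by (auto simp: S2_def T2_def th2)
  obtain P1 where P1: "\<And>N. 1 \<le> P1 N \<and> P1 N \<le> g1 ^ A N \<and> S1 N = P1 N / real_of_int g1 ^ A N"
    using F1(7) unfolding S1_def by metis
  obtain P2 where P2: "\<And>N. 1 \<le> P2 N \<and> P2 N \<le> g2 ^ A N \<and> S2 N = P2 N / real_of_int g2 ^ A N"
    using F2(7) unfolding S2_def by metis
  have gp: "real_of_int g1 ^ A N > 0" "real_of_int g2 ^ A N > 0" for N using G by auto
  have gpi: "g1 ^ A N \<ge> 1" "g2 ^ A N \<ge> 1" for N using g1 assms(2) by auto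
  have approx_gen: "eventually (\<lambda>N. \<bar>x - r N\<bar> * Q N ^ k < c) sequentially"
    if K: "K \<ge> 0" and b: "\<And>N. \<bar>x - r N\<bar> \<le> K * E N" and c: "c > 0" for x r K k and c :: real
    using asym[OF assms(2,1,3) sm rec K c, of k]
  proof eventually_elim
    case (elim N)
    have "\<bar>x - r N\<bar> * Q N ^ k \<le> K * E N * Q N ^ k"
      using b[of N] Qnn[of N] by (intro mult_right_mono) auto
    then show ?case using elim by (simp add: E_def Q_def)
  qed
  have qmul: "real_of_int (g1 ^ A N * g2 ^ A N) \<le> Q N" for N by (simp add: Q_def)
  have qpos: "1 \<le> g1 ^ A N * g2 ^ A N" for N using mult_mono[of 1 "g1^A N" 1 "g2^A N"] gpi[of N] by simp
  have sum: "\<not> algebraic (\<theta>1 + \<theta>2)"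
  proof (rule liouville_crit[where r = "\<lambda>N. S1 N + S2 N" and Q = Q])
    fix N
    show "\<exists>(p::int) (q::int). q \<ge> 1 \<and> real_of_int q \<le> Q N \<and> S1 N + S2 N = p / q"
      apply (rule exI[of _ "P1 N * g2 ^ A N + P2 N * g1 ^ A N"], rule exI[of _ "g1 ^ A N * g2 ^ A N"])
      using P1[of N] P2[of N] gp[of N] qpos[of N] by (simp add: Q_def frac_h)
  next
    show "eventually (\<lambda>N. S1 N + S2 N \<noteq> \<theta>1 + \<theta>2) sequentially"
    proof (intro always_eventually allI)
      fix N show "S1 N + S2 N \<noteq> \<theta>1 + \<theta>2" using T1pos[of N] T2pos[of N] by (simp add: T1_def T2_def)
    qed
  next
    fix k :: nat and c :: real assume "c > 0"
    show "eventually (\<lambda>N. \<bar>\<theta>1 + \<theta>2 - (S1 N + S2 N)\<bar> * Q N ^ k < c) sequentially"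
    proof (rule approx_gen[of 4])
      fix N show "\<bar>\<theta>1 + \<theta>2 - (S1 N + S2 N)\<bar> \<le> 4 * E N"
        using T1le[of N] T2le[of N] T1pos[of N] T2pos[of N] by (simp add: T1_def T2_def)
    qed (use \<open>c > 0\<close> in auto)
  qed
  have tailneg: "T1 N < T2 N" for N
  proof -
    define h where "h n = f2 n - f1 n" for n
    have sh: "summable h" unfolding h_def using summable_diff[OF F2(1) F1(1)] by simp
    have hpos: "h n > 0" for n
    proof -
      have "real_of_int g2 ^ A n < real_of_int g1 ^ A n"
        using G Age2[of n] by (intro power_strict_mono) auto
      then show ?thesis using gp[of n] by (simp add: h_def f1_def f2_def frac_less2)
    qed
    have "0 < (\<Sum>m. h (m + Suc N))"
      using summable_ignore_initial_segment[OF sh, of "Suc N"] hpos by (intro suminf_pos) auto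
    also have "(\<Sum>m. h (m + Suc N)) = suminf h - sum h {..N}"
      using suminf_split_initial_segment[OF sh, of "Suc N"] by (simp add: lessThan_Suc_atMost)
    also have "suminf h = \<theta>2 - \<theta>1" unfolding h_def th1 th2 using suminf_diff[OF F2(1) F1(1)] by simp
    also have "sum h {..N} = S2 N - S1 N" by (simp add: h_def S1_def S2_def sum_subtractf)
    finally show ?thesis by (simp add: T1_def T2_def)
  qed
  have diff: "\<not> algebraic (\<theta>1 - \<theta>2)"
  proof (rule liouville_crit[where r = "\<lambda>N. S1 N - S2 N" and Q = Q])
    fix N
    show "\<exists>(p::int) (q::int). q \<ge> 1 \<and> real_of_int q \<le> Q N \<and> S1 N - S2 N = p / q"
      apply (rule exI[of _ "P1 N * g2 ^ A N - P2 N * g1 ^ A N"], rule exI[of _ "g1 ^ A N * g2 ^ A N"])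
      using P1[of N] P2[of N] gp[of N] qpos[of N] by (simp add: Q_def frac_h)
  next
    show "eventually (\<lambda>N. S1 N - S2 N \<noteq> \<theta>1 - \<theta>2) sequentially"
    proof (intro always_eventually allI)
      fix N show "S1 N - S2 N \<noteq> \<theta>1 - \<theta>2" using tailneg[of N] by (simp add: T1_def T2_def)
    qed
  next
    fix k :: nat and c :: real assume "c > 0"
    show "eventually (\<lambda>N. \<bar>\<theta>1 - \<theta>2 - (S1 N - S2 N)\<bar> * Q N ^ k < c) sequentially"
    proof (rule approx_gen[of 4])
      fix N show "\<bar>\<theta>1 - \<theta>2 - (S1 N - S2 N)\<bar> \<le> 4 * E N"
        using T1le[of N] T2le[of N] T1pos[of N] T2pos[of N] by (simp add: T1_def T2_def abs_le_iff)
    qed (use \<open>c > 0\<close> in auto)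
  qed
  have prod: "\<not> algebraic (\<theta>1 * \<theta>2)"
  proof (rule liouville_crit[where r = "\<lambda>N. S1 N * S2 N" and Q = Q])
    fix N
    show "\<exists>(p::int) (q::int). q \<ge> 1 \<and> real_of_int q \<le> Q N \<and> S1 N * S2 N = p / q"
      apply (rule exI[of _ "P1 N * P2 N"], rule exI[of _ "g1 ^ A N * g2 ^ A N"])
      using P1[of N] P2[of N] gp[of N] qpos[of N] by (simp add: Q_def frac_h)
  next
    have "S1 N * S2 N \<noteq> \<theta>1 * \<theta>2" for N
    proof -
      have e: "\<theta>1 * \<theta>2 - S1 N * S2 N = S1 N * T2 N + T1 N * S2 N + T1 N * T2 N"
        by (simp add: T1_def T2_def algebra_simps)
      have "S1 N * T2 N \<ge> 0" "T1 N * S2 N \<ge> 0" "T1 N * T2 N > 0"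
        using S1ge[of N] S2ge[of N] m1 T1pos[of N] T2pos[of N] by auto
      then show ?thesis using e by linarith
    qed
    then show "eventually (\<lambda>N. S1 N * S2 N \<noteq> \<theta>1 * \<theta>2) sequentially" by simp
  next
    fix k :: nat and c :: real assume "c > 0"
    show "eventually (\<lambda>N. \<bar>\<theta>1 * \<theta>2 - S1 N * S2 N\<bar> * Q N ^ k < c) sequentially"
    proof (rule approx_gen[of 6])
      fix N
      have e: "\<theta>1 * \<theta>2 - S1 N * S2 N = S1 N * T2 N + T1 N * S2 N + T1 N * T2 N"
        by (simp add: T1_def T2_def algebra_simps)
      have S1n: "S1 N \<ge> 0" "S2 N \<ge> 0" using S1ge[of N] S2ge[of N] m1 by auto
      have "S1 N * T2 N \<le> 1 * (2 * E N)" using S1n S1le[of N] T2le[of N] T2pos[of N] by (intro mult_mono) auto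
      moreover have "T1 N * S2 N \<le> (2 * E N) * 1" using S1n S2le[of N] T1le[of N] T1pos[of N] by (intro mult_mono) auto
      moreover have "T1 N * T2 N \<le> (2 * E N) * 1" using S2le[of N] T1le[of N] T1pos[of N] T2pos[of N] by (intro mult_mono) auto
      moreover have "S1 N * T2 N \<ge> 0" "T1 N * S2 N \<ge> 0" "T1 N * T2 N \<ge> 0"
        using S1n T1pos[of N] T2pos[of N] by auto
      ultimately show "\<bar>\<theta>1 * \<theta>2 - S1 N * S2 N\<bar> \<le> 6 * E N" unfolding e by linarith
    qed (use \<open>c > 0\<close> in auto)
  qed
  have quot: "\<not> algebraic (\<theta>1 / \<theta>2)"
  proof (rule liouville_crit[where r = "\<lambda>N. S1 N / S2 N" and Q = Q])
    fix N
    have q1: "1 \<le> P2 N * g1 ^ A N" using mult_mono[of 1 "P2 N" 1 "g1^A N"] P2[of N] gpi[of N] by simp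
    have q2: "P2 N * g1 ^ A N \<le> g1 ^ A N * g2 ^ A N"
      using P2[of N] gpi[of N] by (simp add: mult.commute mult_left_mono)
    show "\<exists>(p::int) (q::int). q \<ge> 1 \<and> real_of_int q \<le> Q N \<and> S1 N / S2 N = p / q"
      apply (rule exI[of _ "P1 N * g2 ^ A N"], rule exI[of _ "P2 N * g1 ^ A N"])
      using P1[of N] P2[of N] gp[of N] q1 q2 by (simp add: Q_def frac_h flip: of_int_le_iff)
  next
    define \<rho> where "\<rho> = real_of_int g2 / real_of_int g1"
    have \<rho>: "0 < \<rho>" "\<rho> < 1" using G by (auto simp: \<rho>_def)
    have sm': "strict_mono (\<lambda>N. A (Suc N))" using sm by (simp add: strict_mono_def)
    have lim: "(\<lambda>N. \<rho> ^ A (Suc N)) \<longlonglongrightarrow> 0"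
      using filterlim_compose[OF LIMSEQ_power_zero filterlim_subseq[OF sm'], of \<rho>] \<rho> by simp
    have "eventually (\<lambda>N. \<rho> ^ A (Suc N) < f1 0 / 2) sequentially"
      using order_tendstoD(2)[OF lim, of "f1 0 / 2"] m1 by simp
    then show "eventually (\<lambda>N. S1 N / S2 N \<noteq> \<theta>1 / \<theta>2) sequentially"
    proof eventually_elim
      case (elim N)
      define b where "b = A (Suc N)"
      have gb: "real_of_int g1 ^ b > 0" "real_of_int g2 ^ b > 0" using G by auto
      have "T1 N * S2 N \<le> T1 N" using mult_left_le[of "S2 N" "T1 N"] S2le[of N] T1pos[of N] by linarith
      also have "\<dots> \<le> 2 / real_of_int g1 ^ b" using F1(4)[of N] by (simp add: T1_def S1_def th1 b_def)
      also have "\<dots> = 2 * \<rho> ^ b / real_of_int g2 ^ b" using gb G by (simp add: \<rho>_def power_divide)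
      also have "\<dots> < f1 0 / real_of_int g2 ^ b" using elim gb by (simp add: b_def divide_strict_right_mono)
      also have "\<dots> \<le> S1 N * T2 N"
      proof -
        have "f1 0 * E N \<le> S1 N * T2 N" using S1ge[of N] T2ge[of N] m1 Epos[of N] by (intro mult_mono) auto
        then show ?thesis by (simp add: E_def b_def)
      qed
      finally have ne: "T1 N * S2 N \<noteq> S1 N * T2 N" by simp
      have S2p: "S2 N > 0" using S2ge[of N] m1 by simp
      have th2p: "\<theta>2 > 0" using S2p T2pos[of N] by (simp add: T2_def)
      have "\<theta>1 / \<theta>2 - S1 N / S2 N = (T1 N * S2 N - S1 N * T2 N) / (\<theta>2 * S2 N)"
        using S2p th2p by (simp add: T1_def T2_def field_simps)
      then show ?case using ne S2p th2p by auto
    qed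
  next
    fix k :: nat and c :: real assume "c > 0"
    define m where "m = f2 0"
    have mp: "m > 0" using m1 by (simp add: m_def)
    show "eventually (\<lambda>N. \<bar>\<theta>1 / \<theta>2 - S1 N / S2 N\<bar> * Q N ^ k < c) sequentially"
    proof (rule approx_gen[of "4 / (m * m)"])
      fix N
      have S2p: "S2 N \<ge> m" using S2ge[of N] by (simp add: m_def)
      have th2p: "\<theta>2 \<ge> m" using S2p T2pos[of N] by (simp add: T2_def)
      have S1n: "S1 N \<ge> 0" using S1ge[of N] m1 by simp
      have eq: "\<theta>1 / \<theta>2 - S1 N / S2 N = (T1 N * S2 N - S1 N * T2 N) / (\<theta>2 * S2 N)"
        using S2p th2p mp by (simp add: T1_def T2_def field_simps)
      have a1: "T1 N * S2 N \<le> 2 * E N" using mult_left_le[of "S2 N" "T1 N"] S2le[of N] T1pos[of N] T1le[of N] by linarith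
      have a2: "S1 N * T2 N \<le> 2 * E N" using mult_left_le_one_le[of "T2 N" "S1 N"] S1le[of N] S1n T2pos[of N] T2le[of N] by linarith
      have a3: "T1 N * S2 N \<ge> 0" "S1 N * T2 N \<ge> 0" using S1n S2p mp T1pos[of N] T2pos[of N] by auto
      have num: "\<bar>T1 N * S2 N - S1 N * T2 N\<bar> \<le> 4 * E N" using a1 a2 a3 by linarith
      have den: "m * m \<le> \<theta>2 * S2 N" using S2p th2p mp by (intro mult_mono) auto
      have "\<bar>\<theta>1 / \<theta>2 - S1 N / S2 N\<bar> = \<bar>T1 N * S2 N - S1 N * T2 N\<bar> / (\<theta>2 * S2 N)"
        unfolding eq using S2p th2p mp by (simp add: abs_divide)
      also have "\<dots> \<le> (4 * E N) / (\<theta>2 * S2 N)" using num S2p th2p mp by (intro divide_right_mono) auto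
      also have "\<dots> \<le> (4 * E N) / (m * m)" 
      proof (rule divide_left_mono)
        have "0 < m * m" using mp by simp
        then show "0 < \<theta>2 * S2 N * (m * m)" using S2p th2p mp by (intro mult_pos_pos) auto
      qed (use den Epos[of N] in auto)
      finally show "\<bar>\<theta>1 / \<theta>2 - S1 N / S2 N\<bar> \<le> 4 / (m * m) * E N" by simp
    qed (use \<open>c > 0\<close> mp in auto)
  qed
  show ?thesis using sum diff prod quot by blast
qed

end
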